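(* Let $P$ be a poset and $\mathcal{U}$ a join-specification for $P$. Then there is a largest join-specification $\mathcal{U}'\subseteq\mathcal{U}$ that is frame-generating.
   Context: A join-specification for $P$ is a set $\mathcal{U}\subseteq\wp(P)$ such that $\bigvee S$ exists in $P$ for every $S\in\mathcal{U}$ and $\{p\}\in\mathcal{U}$ for every $p\in P$. A $\mathcal{U}$-ideal is a down-closed $C\subseteq P$ with $\bigvee S\in C$ whenever $S\in\mathcal{U}$, $S\subseteq C$; $\mathcal{I}_{\mathcal{U}}$ is the complete lattice of $\mathcal{U}$-ideals ordered by inclusion; $\mathcal{U}$ is frame-generating if $\mathcal{I}_{\mathcal{U}}$ is a frame. *)

theory Defs
  imports Main
begin

text \<open>The poset P is the carrier of a type of class order (P = UNIV).\<close>

definition is_join :: "'a::order set \<Rightarrow> 'a \<Rightarrow> bool" where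
  "is_join S s \<longleftrightarrow> (\<forall>x\<in>S. x \<le> s) \<and> (\<forall>t. (\<forall>x\<in>S. x \<le> t) \<longrightarrow> s \<le> t)"

definition Join :: "'a::order set \<Rightarrow> 'a" where
  "Join S = (THE s. is_join S s)"

definition join_spec :: "'a::order set set \<Rightarrow> bool" where
  "join_spec U \<longleftrightarrow> (\<forall>S\<in>U. \<exists>s. is_join S s) \<and> (\<forall>p. {p} \<in> U)"

definition U_ideal :: "'a::order set set \<Rightarrow> 'a set \<Rightarrow> bool" where
  "U_ideal U C \<longleftrightarrow> (\<forall>x y. x \<in> C \<longrightarrow> y \<le> x \<longrightarrow> y \<in> C)
      \<and> (\<forall>S\<in>U. S \<subseteq> C \<longrightarrow> Join S \<in> C)"

definition U_ideals :: "'a::order set set \<Rightarrow> 'a set set" where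
  "U_ideals U = {C. U_ideal U C}"

definition is_lub_in :: "'b set set \<Rightarrow> 'b set set \<Rightarrow> 'b set \<Rightarrow> bool" where
  "is_lub_in L X s \<longleftrightarrow> s \<in> L \<and> (\<forall>x\<in>X. x \<subseteq> s) \<and> (\<forall>t\<in>L. (\<forall>x\<in>X. x \<subseteq> t) \<longrightarrow> s \<subseteq> t)"

definition is_glb_in :: "'b set set \<Rightarrow> 'b set set \<Rightarrow> 'b set \<Rightarrow> bool" where
  "is_glb_in L X s \<longleftrightarrow> s \<in> L \<and> (\<forall>x\<in>X. s \<subseteq> x) \<and> (\<forall>t\<in>L. (\<forall>x\<in>X. t \<subseteq> x) \<longrightarrow> t \<subseteq> s)"

definition sup_in :: "'b set set \<Rightarrow> 'b set set \<Rightarrow> 'b set" where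
  "sup_in L X = (THE s. is_lub_in L X s)"

definition inf_in :: "'b set set \<Rightarrow> 'b set set \<Rightarrow> 'b set" where
  "inf_in L X = (THE s. is_glb_in L X s)"

definition complete_lattice_in :: "'b set set \<Rightarrow> bool" where
  "complete_lattice_in L \<longleftrightarrow> (\<forall>X\<subseteq>L. (\<exists>s. is_lub_in L X s) \<and> (\<exists>s. is_glb_in L X s))"

definition frame_in :: "'b set set \<Rightarrow> bool" where
  "frame_in L \<longleftrightarrow> complete_lattice_in L \<and>
     (\<forall>a\<in>L. \<forall>X\<subseteq>L. inf_in L {a, sup_in L X} = sup_in L ((\<lambda>x. inf_in L {a, x}) ` X))"

definition frame_generating :: "'a::order set set \<Rightarrow> bool" where
  "frame_generating U \<longleftrightarrow> frame_in (U_ideals U)"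

end

theory Submission
  imports Defs
begin

definition cl :: "'a::order set set \<Rightarrow> 'a set \<Rightarrow> 'a set" where
  "cl U A = \<Inter>{C. U_ideal U C \<and> A \<subseteq> C}"

lemma ideal_Inter:
  assumes H: "\<forall>C\<in>F. U_ideal U C" shows "U_ideal U (\<Inter>F)"
  unfolding U_ideal_def
proof (intro conjI allI impI ballI)
  fix x y assume "x \<in> \<Inter>F" "y \<le> x"
  show "y \<in> \<Inter>F"
  proof
    fix C assume "C \<in> F"
    then have "U_ideal U C" "x \<in> C" using H \<open>x \<in> \<Inter>F\<close> by auto
    then show "y \<in> C" using \<open>y \<le> x\<close> unfolding U_ideal_def by blast
  qed
next
  fix S assume "S \<in> U" "S \<subseteq> \<Inter>F"
  show "Join S \<in> \<Inter>F"
  proof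
    fix C assume "C \<in> F"
    then have "U_ideal U C" "S \<subseteq> C" using H \<open>S \<subseteq> \<Inter>F\<close> by auto
    then show "Join S \<in> C" using \<open>S \<in> U\<close> unfolding U_ideal_def by blast
  qed
qed

lemma cl_ideal: "U_ideal U (cl U A)"
  unfolding cl_def by (rule ideal_Inter) blast

lemma cl_sub: "A \<subseteq> cl U A"
  unfolding cl_def by blast

lemma cl_least: "U_ideal U C \<Longrightarrow> A \<subseteq> C \<Longrightarrow> cl U A \<subseteq> C"
  unfolding cl_def by blast

lemma cl_mono_U: "V \<subseteq> U \<Longrightarrow> cl V A \<subseteq> cl U A"
proof -
  assume "V \<subseteq> U"
  then have "U_ideal V (cl U A)" using cl_ideal[of U A] unfolding U_ideal_def by blast
  then show ?thesis using cl_least cl_sub by blast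
qed

lemma lub: "is_lub_in (U_ideals U) X (cl U (\<Union>X))"
  unfolding is_lub_in_def U_ideals_def
proof (intro conjI ballI allI impI)
  show "cl U (\<Union>X) \<in> {C. U_ideal U C}" using cl_ideal by blast
next
  fix x assume "x \<in> X" then show "x \<subseteq> cl U (\<Union>X)" using cl_sub by blast
next
  fix t assume "t \<in> {C. U_ideal U C}" "\<forall>x\<in>X. x \<subseteq> t"
  then show "cl U (\<Union>X) \<subseteq> t" using cl_least[of U t "\<Union>X"] by blast
qed

lemma lub_unique: assumes "is_lub_in L X s" "is_lub_in L X t" shows "s = t"
proof -
  have a: "s \<in> L" "\<forall>x\<in>X. x \<subseteq> s" "\<forall>u\<in>L. (\<forall>x\<in>X. x \<subseteq> u) \<longrightarrow> s \<subseteq> u"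
    using assms(1) unfolding is_lub_in_def by auto
  have b: "t \<in> L" "\<forall>x\<in>X. x \<subseteq> t" "\<forall>u\<in>L. (\<forall>x\<in>X. x \<subseteq> u) \<longrightarrow> t \<subseteq> u"
    using assms(2) unfolding is_lub_in_def by auto
  have "s \<subseteq> t" using a(3) b(1,2) by simp
  moreover have "t \<subseteq> s" using b(3) a(1,2) by simp
  ultimately show ?thesis by (rule subset_antisym)
qed

lemma sup_eq: "sup_in (U_ideals U) X = cl U (\<Union>X)"
  unfolding sup_in_def
  by (rule the_equality) (rule lub, rule lub_unique[OF _ lub])

lemma glb: "X \<subseteq> U_ideals U \<Longrightarrow> is_glb_in (U_ideals U) X (\<Inter>X)"
  unfolding is_glb_in_def U_ideals_def using ideal_Inter[of X U] by auto

lemma glb_unique: assumes "is_glb_in L X s" "is_glb_in L X t" shows "s = t"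
proof -
  have a: "s \<in> L" "\<forall>x\<in>X. s \<subseteq> x" "\<forall>u\<in>L. (\<forall>x\<in>X. u \<subseteq> x) \<longrightarrow> u \<subseteq> s"
    using assms(1) unfolding is_glb_in_def by auto
  have b: "t \<in> L" "\<forall>x\<in>X. t \<subseteq> x" "\<forall>u\<in>L. (\<forall>x\<in>X. u \<subseteq> x) \<longrightarrow> u \<subseteq> t"
    using assms(2) unfolding is_glb_in_def by auto
  have "s \<subseteq> t" using b(3) a(1,2) by simp
  moreover have "t \<subseteq> s" using a(3) b(1,2) by simp
  ultimately show ?thesis by (rule subset_antisym)
qed

lemma inf_eq: "X \<subseteq> U_ideals U \<Longrightarrow> inf_in (U_ideals U) X = \<Inter>X"
  unfolding inf_in_def
  by (rule the_equality) (erule glb, rule glb_unique[OF _ glb], assumption+)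

lemma cl_U: "complete_lattice_in (U_ideals U)"
  unfolding complete_lattice_in_def using lub glb by metis

lemma frame_iff: "frame_generating U \<longleftrightarrow>
   (\<forall>a X. U_ideal U a \<longrightarrow> (\<forall>x\<in>X. U_ideal U x) \<longrightarrow> a \<inter> cl U (\<Union>X) = cl U (\<Union>x\<in>X. a \<inter> x))"
proof -
  have eq: "inf_in (U_ideals U) {a, sup_in (U_ideals U) X} = a \<inter> cl U (\<Union>X)
     \<and> sup_in (U_ideals U) ((\<lambda>x. inf_in (U_ideals U) {a, x}) ` X) = cl U (\<Union>x\<in>X. a \<inter> x)"
    if "a \<in> U_ideals U" "X \<subseteq> U_ideals U" for a X
  proof -
    have "cl U (\<Union>X) \<in> U_ideals U" using cl_ideal unfolding U_ideals_def by blast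
    then have 1: "inf_in (U_ideals U) {a, sup_in (U_ideals U) X} = a \<inter> cl U (\<Union>X)"
      using that by (simp add: sup_eq inf_eq)
    have "(\<lambda>x. inf_in (U_ideals U) {a, x}) ` X = (\<lambda>x. a \<inter> x) ` X"
      using that by (intro image_cong) (auto simp: inf_eq)
    then show ?thesis using 1 by (simp add: sup_eq)
  qed
  show ?thesis
  proof
    assume fg: "frame_generating U"
    show "\<forall>a X. U_ideal U a \<longrightarrow> (\<forall>x\<in>X. U_ideal U x) \<longrightarrow> a \<inter> cl U (\<Union>X) = cl U (\<Union>x\<in>X. a \<inter> x)"
    proof (intro allI impI)
      fix a X assume "U_ideal U a" "\<forall>x\<in>X. U_ideal U x"
      then have h: "a \<in> U_ideals U" "X \<subseteq> U_ideals U" unfolding U_ideals_def by auto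
      then have "inf_in (U_ideals U) {a, sup_in (U_ideals U) X} = sup_in (U_ideals U) ((\<lambda>x. inf_in (U_ideals U) {a, x}) ` X)"
        using fg unfolding frame_generating_def frame_in_def by blast
      then show "a \<inter> cl U (\<Union>X) = cl U (\<Union>x\<in>X. a \<inter> x)" using eq[OF h] by simp
    qed
  next
    assume H: "\<forall>a X. U_ideal U a \<longrightarrow> (\<forall>x\<in>X. U_ideal U x) \<longrightarrow> a \<inter> cl U (\<Union>X) = cl U (\<Union>x\<in>X. a \<inter> x)"
    show "frame_generating U" unfolding frame_generating_def frame_in_def
    proof (intro conjI cl_U ballI allI impI)
      fix a X assume h: "a \<in> U_ideals U" "X \<subseteq> U_ideals U"
      then have "U_ideal U a" "\<forall>x\<in>X. U_ideal U x" unfolding U_ideals_def by auto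
      then have "a \<inter> cl U (\<Union>X) = cl U (\<Union>x\<in>X. a \<inter> x)" using H by blast
      then show "inf_in (U_ideals U) {a, sup_in (U_ideals U) X} = sup_in (U_ideals U) ((\<lambda>x. inf_in (U_ideals U) {a, x}) ` X)"
        using eq[OF h] by simp
    qed
  qed
qed

definition DD :: "'a::order set set \<Rightarrow> bool" where
  "DD U \<longleftrightarrow> (\<forall>S\<in>U. \<forall>x. x \<le> Join S \<longrightarrow> x \<in> cl U ({y. y \<le> x} \<inter> {y. \<exists>s\<in>S. y \<le> s}))"

lemma Join_is: "\<exists>s. is_join S s \<Longrightarrow> is_join S (Join S)"
proof -
  assume "\<exists>s. is_join S s"
  then obtain s where s: "is_join S s" by blast
  have "\<And>t. is_join S t \<Longrightarrow> t = s" using s unfolding is_join_def by (meson order_antisym)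
  then have "Join S = s" unfolding Join_def using s by (rule the_equality[rotated])
  then show ?thesis using s by simp
qed

lemma down_ideal: "join_spec U \<Longrightarrow> U_ideal U {y. y \<le> x}"
  unfolding U_ideal_def
proof (intro conjI allI impI ballI)
  fix a y assume "a \<in> {y. y \<le> x}" "y \<le> a" then show "y \<in> {y. y \<le> x}" by simp
next
  fix S assume "join_spec U" "S \<in> U" "S \<subseteq> {y. y \<le> x}"
  then have "is_join S (Join S)" using Join_is unfolding join_spec_def by blast
  then show "Join S \<in> {y. y \<le> x}" using \<open>S \<subseteq> {y. y \<le> x}\<close> unfolding is_join_def by blast
qed

lemma frame_DD:
  assumes js: "join_spec U" and fg: "frame_generating U"
  shows "DD U"
  unfolding DD_def
proof (intro ballI allI impI)
  fix S x assume S: "S \<in> U" and x: "x \<le> Join S"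
  let ?a = "{y. y \<le> x}"
  let ?X = "(\<lambda>s. {y. y \<le> s}) ` S"
  have ia: "U_ideal U ?a" using down_ideal js by blast
  have iX: "\<forall>c\<in>?X. U_ideal U c" using down_ideal js by blast
  have "S \<subseteq> \<Union>?X" by auto
  then have "S \<subseteq> cl U (\<Union>?X)" using cl_sub by blast
  then have "Join S \<in> cl U (\<Union>?X)" using cl_ideal S unfolding U_ideal_def by blast
  then have "x \<in> cl U (\<Union>?X)" using cl_ideal x unfolding U_ideal_def by blast
  then have "x \<in> ?a \<inter> cl U (\<Union>?X)" by simp
  also have "\<dots> = cl U (\<Union>c\<in>?X. ?a \<inter> c)" using fg ia iX frame_iff by blast
  also have "(\<Union>c\<in>?X. ?a \<inter> c) = {y. y \<le> x} \<inter> {y. \<exists>s\<in>S. y \<le> s}" by auto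
  finally show "x \<in> cl U ({y. y \<le> x} \<inter> {y. \<exists>s\<in>S. y \<le> s})" .
qed

lemma DD_frame:
  assumes D: "DD U"
  shows "frame_generating U"
  unfolding frame_iff
proof (intro allI impI)
  fix a X assume ia: "U_ideal U a" and iX: "\<forall>x\<in>X. U_ideal U x"
  let ?B = "cl U (\<Union>x\<in>X. a \<inter> x)"
  have iB: "U_ideal U ?B" by (rule cl_ideal)
  have "a \<inter> x \<subseteq> a \<inter> cl U (\<Union>X)" if "x \<in> X" for x using that cl_sub by blast
  moreover have "U_ideal U (a \<inter> cl U (\<Union>X))"
    using ideal_Inter[of "{a, cl U (\<Union>X)}" U] ia cl_ideal by auto
  ultimately have le1: "?B \<subseteq> a \<inter> cl U (\<Union>X)" by (intro cl_least) auto
  define Dm where "Dm = {y. \<forall>z. z \<le> y \<longrightarrow> z \<in> a \<longrightarrow> z \<in> ?B}"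
  have "U_ideal U Dm"
    unfolding U_ideal_def
  proof (intro conjI allI impI ballI)
    fix x y assume "x \<in> Dm" "y \<le> x" then show "y \<in> Dm" unfolding Dm_def
      using order_trans by blast
  next
    fix S assume S: "S \<in> U" "S \<subseteq> Dm"
    show "Join S \<in> Dm" unfolding Dm_def
    proof (intro CollectI allI impI)
      fix z assume z: "z \<le> Join S" "z \<in> a"
      have sub: "{y. y \<le> z} \<inter> {y. \<exists>s\<in>S. y \<le> s} \<subseteq> ?B"
      proof
        fix w assume "w \<in> {y. y \<le> z} \<inter> {y. \<exists>s\<in>S. y \<le> s}"
        then obtain s where "w \<le> z" "s \<in> S" "w \<le> s" by auto
        moreover have "w \<in> a" using ia z \<open>w \<le> z\<close> unfolding U_ideal_def by blast
        ultimately show "w \<in> ?B" using S unfolding Dm_def by blast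
      qed
      have "z \<in> cl U ({y. y \<le> z} \<inter> {y. \<exists>s\<in>S. y \<le> s})" using D S z unfolding DD_def by blast
      then show "z \<in> ?B" using cl_least[OF iB sub] by blast
    qed
  qed
  moreover have "\<Union>X \<subseteq> Dm"
  proof
    fix y assume "y \<in> \<Union>X"
    then obtain x where x: "x \<in> X" "y \<in> x" by blast
    show "y \<in> Dm" unfolding Dm_def
    proof (intro CollectI allI impI)
      fix z assume "z \<le> y" "z \<in> a"
      then have "z \<in> a \<inter> x" using iX x unfolding U_ideal_def by blast
      then have "z \<in> (\<Union>x\<in>X. a \<inter> x)" using x(1) by blast
      then show "z \<in> ?B" using cl_sub[of "\<Union>x\<in>X. a \<inter> x" U] by (rule subsetD[rotated])
    qed
  qed
  ultimately have "cl U (\<Union>X) \<subseteq> Dm" by (rule cl_least)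
  then have "a \<inter> cl U (\<Union>X) \<subseteq> ?B" unfolding Dm_def by auto
  with le1 show "a \<inter> cl U (\<Union>X) = ?B" by (rule subset_antisym[rotated])
qed

theorem proposition5p2:
  fixes U :: "'a::order set set"
  assumes "join_spec U"
  shows "\<exists>U'. U' \<subseteq> U \<and> join_spec U' \<and> frame_generating U' \<and>
           (\<forall>V. V \<subseteq> U \<and> join_spec V \<and> frame_generating V \<longrightarrow> V \<subseteq> U')"
proof -
  define F where "F = {V. V \<subseteq> U \<and> join_spec V \<and> frame_generating V}"
  define U' where "U' = \<Union>F"
  define V0 where "V0 = {{p} | p::'a. True}"
  have jV0: "join_spec V0" unfolding join_spec_def V0_def is_join_def by auto
  have "DD V0" unfolding DD_def
  proof (intro ballI allI impI)
    fix S x assume "S \<in> V0" "x \<le> Join S"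
    then obtain p where p: "S = {p}" unfolding V0_def by blast
    have "is_join S (Join S)" using jV0 \<open>S \<in> V0\<close> Join_is unfolding join_spec_def by blast
    then have "Join S = p" using p unfolding is_join_def by (simp add: order_antisym)
    then have "x \<in> {y. y \<le> x} \<inter> {y. \<exists>s\<in>S. y \<le> s}" using p \<open>x \<le> Join S\<close> by auto
    then show "x \<in> cl V0 ({y. y \<le> x} \<inter> {y. \<exists>s\<in>S. y \<le> s})"
      using cl_sub[of _ V0] by (rule subsetD[rotated])
  qed
  then have "frame_generating V0" by (rule DD_frame)
  moreover have "V0 \<subseteq> U" using assms unfolding V0_def join_spec_def by auto
  ultimately have "V0 \<in> F" using jV0 unfolding F_def by blast
  have sub: "U' \<subseteq> U" unfolding U'_def F_def by blast
  have js: "join_spec U'"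
    using assms sub \<open>V0 \<in> F\<close> unfolding join_spec_def U'_def V0_def by blast
  have "DD U'" unfolding DD_def
  proof (intro ballI allI impI)
    fix S x assume "S \<in> U'" "x \<le> Join S"
    then obtain V where V: "V \<in> F" "S \<in> V" unfolding U'_def by blast
    then have "DD V" using frame_DD unfolding F_def by blast
    then have "x \<in> cl V ({y. y \<le> x} \<inter> {y. \<exists>s\<in>S. y \<le> s})"
      using V \<open>x \<le> Join S\<close> unfolding DD_def by blast
    moreover have "V \<subseteq> U'" using V unfolding U'_def by blast
    ultimately show "x \<in> cl U' ({y. y \<le> x} \<inter> {y. \<exists>s\<in>S. y \<le> s})"
      using cl_mono_U by blast
  qed
  then have "frame_generating U'" by (rule DD_frame)
  moreover have "\<forall>V. V \<subseteq> U \<and> join_spec V \<and> frame_generating V \<longrightarrow> V \<subseteq> U'"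
    unfolding U'_def F_def by blast
  ultimately show ?thesis using sub js by blast
qed

end
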